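(* Let $A,A^*:V\to V$ be diagonalizable linear maps, each with exactly $d+1$ distinct eigenvalues, let $E_0,\dots,E_d$ be an ordering of the primitive idempotents of $A$ and $E^*_0,\dots,E^*_d$ an ordering of those of $A^*$, with $\theta_i$ (resp. $\theta^*_i$) the eigenvalue of $A$ (resp. $A^*$) for $E_i$ (resp. $E^*_i$), and assume $\dim E^*_0V=1$. Let $\{\zeta_i\}_{i=0}^d$ be the split sequence. Then $$\zeta_d=\eta^*_d(\theta^*_0)\,\tau_d(\theta_d)\,\mathrm{tr}(E_dE^*_0),\qquad \sum_{i=0}^d\eta_{d-i}(\theta_0)\eta^*_{d-i}(\theta^*_0)\zeta_i=\eta^*_d(\theta^*_0)\,\eta_d(\theta_0)\,\mathrm{tr}(E_0E^*_0).$$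
   Context: $V$ is a nonzero finite-dimensional vector space over an algebraically closed field $\mathcal K$. The primitive idempotent of a diagonalizable $X$ for eigenvalue $\lambda_i$ is $\prod_{j\ne i}\frac{X-\lambda_jI}{\lambda_i-\lambda_j}$. Polynomials: $\eta_i(x)=\prod_{j=0}^{i-1}(x-\theta_{d-j})$, $\eta^*_i(x)=\prod_{j=0}^{i-1}(x-\theta^*_{d-j})$, $\tau_i(x)=\prod_{j=0}^{i-1}(x-\theta_j)$ for $0\le i\le d$ (empty products equal $1$). Since $\dim E^*_0V=1$, the map $E^*_0\tau_i(A)$ acts on $E^*_0V$ as a scalar $\chi_i$; the split sequence is $\zeta_i=(\theta^*_0-\theta^*_1)\cdots(\theta^*_0-\theta^*_i)\chi_i$ for $0\le i\le d$. *)

theory Defs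
  imports "Jordan_Normal_Form.DL_Rank" "Jordan_Normal_Form.Char_Poly"
    "HOL-Computational_Algebra.Polynomial"
begin

fun mat_prod_list :: "nat \<Rightarrow> 'a::comm_ring_1 mat list \<Rightarrow> 'a mat" where
  "mat_prod_list n [] = 1\<^sub>m n"
| "mat_prod_list n (M # Ms) = M * mat_prod_list n Ms"

definition mtrace :: "'a::comm_ring_1 mat \<Rightarrow> 'a" where
  "mtrace M = (\<Sum>i<dim_row M. M $$ (i, i))"

definition diagonalizable :: "'a::comm_ring_1 mat \<Rightarrow> bool" where
  "diagonalizable M \<longleftrightarrow> (\<exists>D. similar_mat M D \<and> diagonal_mat D)"

definition prim_idem :: "nat \<Rightarrow> 'a::field mat \<Rightarrow> (nat \<Rightarrow> 'a) \<Rightarrow> nat \<Rightarrow> nat \<Rightarrow> 'a mat" where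
  "prim_idem n X th d i = mat_prod_list n
     (map (\<lambda>j. (1 / (th i - th j)) \<cdot>\<^sub>m (X - th j \<cdot>\<^sub>m 1\<^sub>m n)) (filter (\<lambda>j. j \<noteq> i) [0..<Suc d]))"

definition eta_poly :: "(nat \<Rightarrow> 'a::comm_ring_1) \<Rightarrow> nat \<Rightarrow> nat \<Rightarrow> 'a \<Rightarrow> 'a" where
  "eta_poly th d i x = (\<Prod>j<i. x - th (d - j))"

definition tau_poly :: "(nat \<Rightarrow> 'a::comm_ring_1) \<Rightarrow> nat \<Rightarrow> 'a \<Rightarrow> 'a" where
  "tau_poly th i x = (\<Prod>j<i. x - th j)"

definition tau_mat :: "nat \<Rightarrow> 'a::comm_ring_1 mat \<Rightarrow> (nat \<Rightarrow> 'a) \<Rightarrow> nat \<Rightarrow> 'a mat" where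
  "tau_mat n X th i = mat_prod_list n (map (\<lambda>j. X - th j \<cdot>\<^sub>m 1\<^sub>m n) [0..<i])"

definition split_chi :: "nat \<Rightarrow> 'a::field mat \<Rightarrow> 'a mat \<Rightarrow> (nat \<Rightarrow> 'a) \<Rightarrow> nat \<Rightarrow> 'a" where
  "split_chi n X Es0 th i = (THE c. \<forall>v \<in> carrier_vec n.
      (Es0 * tau_mat n X th i) *\<^sub>v (Es0 *\<^sub>v v) = c \<cdot>\<^sub>v (Es0 *\<^sub>v v))"

definition split_seq :: "nat \<Rightarrow> 'a::field mat \<Rightarrow> 'a mat \<Rightarrow> (nat \<Rightarrow> 'a) \<Rightarrow> (nat \<Rightarrow> 'a) \<Rightarrow> nat \<Rightarrow> nat \<Rightarrow> 'a" where
  "split_seq n X Xs th ths d i =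
     (\<Prod>j\<in>{1..i}. ths 0 - ths j) * split_chi n X (prim_idem n Xs ths d 0) th i"

end

theory Submission
  imports Defs "Jordan_Normal_Form.DL_Rank_Submatrix"
begin


lemma det2: fixes f :: "nat \<times> nat \<Rightarrow> 'a::comm_ring_1"
  shows "det (mat 2 2 f) = f (0,0) * f (1,1) - f (0,1) * f (1,0)"
proof -
  have c: "mat 2 2 f \<in> carrier_mat 2 2" by auto
  have "det (mat 2 2 f) = (\<Sum>i<2. mat 2 2 f $$ (i,0) * cofactor (mat 2 2 f) i 0)"
    by (rule laplace_expansion_column[OF c]) auto
  also have "\<dots> = f (0,0) * cofactor (mat 2 2 f) 0 0 + f (1,0) * cofactor (mat 2 2 f) 1 0"
    by (simp add: numeral_2_eq_2)
  also have "cofactor (mat 2 2 f) 0 0 = f (1,1)"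
    unfolding cofactor_def by (subst det_single) (auto simp: mat_delete_def)
  also have "cofactor (mat 2 2 f) 1 0 = - f (0,1)"
    unfolding cofactor_def by (subst det_single) (auto simp: mat_delete_def)
  finally show ?thesis by (simp add: algebra_simps)
qed

lemma pick2: assumes "(i::nat) < j" shows "pick {i,j} 0 = i" "pick {i,j} 1 = j"
proof -
  show a: "pick {i,j} 0 = i" using assms by (auto intro!: Least_equality)
  show "pick {i,j} 1 = j" using assms a by (auto simp: One_nat_def intro!: Least_equality)
qed

lemma minor_zero:
  fixes E :: "'a::field mat"
  assumes E: "E \<in> carrier_mat n n" and r: "vec_space.rank n E \<le> 1"
    and ij: "i < j" "j < n" and kl: "k < l" "l < n"
  shows "E $$ (i,k) * E $$ (j,l) = E $$ (i,l) * E $$ (j,k)"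
proof (rule ccontr)
  assume ne: "\<not> ?thesis"
  have cI: "card {x. x < dim_row E \<and> x \<in> {i,j}} = 2" using E ij
    by (subgoal_tac "{x. x < dim_row E \<and> x \<in> {i,j}} = {i,j}") auto
  have cJ: "card {x. x < dim_col E \<and> x \<in> {k,l}} = 2" using E kl
    by (subgoal_tac "{x. x < dim_col E \<and> x \<in> {k,l}} = {k,l}") auto
  have cJ': "card {x. x < n \<and> x \<in> {k,l}} = 2" using cJ E by simp
  have "submatrix E {i,j} {k,l} = mat 2 2 (\<lambda>(a,b). E $$ (pick {i,j} a, pick {k,l} b))"
    unfolding submatrix_def cI cJ by simp
  hence "det (submatrix E {i,j} {k,l}) = E $$ (i,k) * E $$ (j,l) - E $$ (i,l) * E $$ (j,k)"
    using det2[of "\<lambda>(a,b). E $$ (pick {i,j} a, pick {k,l} b)"] pick2[OF ij(1)] pick2[OF kl(1)]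
    by (simp del: pick.simps)
  hence "det (submatrix E {i,j} {k,l}) \<noteq> 0" using ne by simp
  from vec_space.rank_gt_minor[OF E this] cJ' r show False by simp
qed



lemma minor_all:
  fixes E :: "'a::field mat"
  assumes E: "E \<in> carrier_mat n n" and r: "vec_space.rank n E \<le> 1"
    and "i < n" "j < n" "k < n" "l < n"
  shows "E $$ (i,k) * E $$ (j,l) = E $$ (i,l) * E $$ (j,k)"
proof -
  have s: "E $$ (i,k) * E $$ (j,l) = E $$ (i,l) * E $$ (j,k)"
    if "i < j" "j < n" "k < n" "l < n" for i j k l
  proof (cases "k < l")
    case True then show ?thesis using minor_zero[OF E r that(1,2) True that(4)] by simp
  next
    case False
    then show ?thesis
    proof (cases "k = l")
      case False
      with \<open>\<not> k < l\<close> have "l < k" by simp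
      then show ?thesis using minor_zero[OF E r that(1,2) \<open>l<k\<close> that(3)] by (simp add: ac_simps)
    qed simp
  qed
  show ?thesis
  proof (cases "i < j")
    case True then show ?thesis using s assms by blast
  next
    case False then show ?thesis using s[of j i l k] assms
      by (cases "i = j") (auto simp: ac_simps)
  qed
qed

lemma rank1_nonzero:
  fixes E :: "'a::field mat"
  assumes E: "E \<in> carrier_mat n n" and r: "vec_space.rank n E = 1"
  shows "\<exists>p q. p < n \<and> q < n \<and> E $$ (p,q) \<noteq> 0"
proof (rule ccontr)
  assume "\<not> ?thesis"
  hence "E = 0\<^sub>m n n" using E by (auto intro!: eq_matI)
  moreover have "vec_space.rank n (0\<^sub>m n n :: 'a mat) = 0" by (rule vec_space.rank_0I)
  ultimately show False using r by simp
qed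

lemma trace_sandwich:
  fixes E M :: "'a::field mat"
  assumes E: "E \<in> carrier_mat n n" and r: "vec_space.rank n E = 1" and M: "M \<in> carrier_mat n n"
  shows "E * M * E = mtrace (M * E) \<cdot>\<^sub>m E"
proof -
  obtain p q where pq: "p < n" "q < n" "E $$ (p,q) \<noteq> 0" using rank1_nonzero[OF E r] by blast
  define u where "u x = E $$ (x,q)" for x
  define w where "w y = E $$ (p,y) / E $$ (p,q)" for y
  have Euw: "E $$ (x,y) = u x * w y" if "x < n" "y < n" for x y
  proof -
    have "E $$ (x,y) * E $$ (p,q) = E $$ (x,q) * E $$ (p,y)"
      using minor_all[OF E _ that(1) pq(1) that(2) pq(2)] r by simp
    then show ?thesis using pq(3) unfolding u_def w_def by (simp add: field_simps)
  qed
  have tr: "mtrace (M * E) = (\<Sum>c<n. \<Sum>a<n. w c * M $$ (c,a) * u a)"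
    unfolding mtrace_def using M E
    by (auto simp: scalar_prod_def Euw sum_distrib_left ac_simps atLeast0LessThan intro!: sum.cong)
  show ?thesis
  proof (rule eq_matI)
    fix i j assume ij: "i < dim_row (mtrace (M * E) \<cdot>\<^sub>m E)" "j < dim_col (mtrace (M * E) \<cdot>\<^sub>m E)"
    hence ij': "i < n" "j < n" using E by auto
    have "(E * M * E) $$ (i,j) = (\<Sum>a<n. (E * M) $$ (i,a) * E $$ (a,j))"
      using ij' E M by (subst index_mult_mat) (auto simp: scalar_prod_def atLeast0LessThan)
    also have "\<dots> = (\<Sum>a<n. (\<Sum>b<n. E $$ (i,b) * M $$ (b,a)) * E $$ (a,j))"
      using ij' E M by (auto simp: scalar_prod_def atLeast0LessThan intro!: sum.cong)
    also have "\<dots> = (\<Sum>a<n. \<Sum>b<n. (u i * w j) * (w b * M $$ (b,a) * u a))"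
    proof (rule sum.cong[OF refl])
      fix a assume a: "a \<in> {..<n}"
      have "(\<Sum>b<n. E $$ (i,b) * M $$ (b,a)) * E $$ (a,j) = (\<Sum>b<n. u i * w b * M $$ (b,a)) * (u a * w j)"
        using a ij' by (simp add: Euw)
      also have "\<dots> = (\<Sum>b<n. (u i * w j) * (w b * M $$ (b,a) * u a))"
        by (subst sum_distrib_right) (auto intro!: sum.cong simp: ac_simps)
      finally show "(\<Sum>b<n. E $$ (i,b) * M $$ (b,a)) * E $$ (a,j) = (\<Sum>b<n. (u i * w j) * (w b * M $$ (b,a) * u a))" .
    qed
    also have "\<dots> = (u i * w j) * (\<Sum>b<n. \<Sum>a<n. w b * M $$ (b,a) * u a)"
      by (subst sum.swap) (simp add: sum_distrib_left)
    also have "\<dots> = (mtrace (M * E) \<cdot>\<^sub>m E) $$ (i,j)"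
      using ij' E by (simp add: tr Euw ac_simps)
    finally show "(E * M * E) $$ (i,j) = (mtrace (M * E) \<cdot>\<^sub>m E) $$ (i,j)" .
  qed (use E M in auto)
qed

lemma smult_mat_vec: "v \<in> carrier_vec (dim_col A) \<Longrightarrow> (k \<cdot>\<^sub>m A) *\<^sub>v v = (k::'a::comm_ring_1) \<cdot>\<^sub>v (A *\<^sub>v v)"
  by (rule eq_vecI) (auto simp: scalar_prod_def sum_distrib_left ac_simps)

lemma chi_trace:
  fixes E M :: "'a::field mat"
  assumes E: "E \<in> carrier_mat n n" and r: "vec_space.rank n E = 1" and M: "M \<in> carrier_mat n n"
  shows "(THE c. \<forall>v \<in> carrier_vec n. (E * M) *\<^sub>v (E *\<^sub>v v) = c \<cdot>\<^sub>v (E *\<^sub>v v)) = mtrace (M * E)"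
proof (rule the_equality)
  show "\<forall>v \<in> carrier_vec n. (E * M) *\<^sub>v (E *\<^sub>v v) = mtrace (M * E) \<cdot>\<^sub>v (E *\<^sub>v v)"
  proof
    fix v :: "'a vec" assume v: "v \<in> carrier_vec n"
    have "(E * M) *\<^sub>v (E *\<^sub>v v) = (E * M * E) *\<^sub>v v"
      by (rule assoc_mult_mat_vec[symmetric]) (use E M v in auto)
    also have "\<dots> = mtrace (M * E) \<cdot>\<^sub>v (E *\<^sub>v v)"
      unfolding trace_sandwich[OF E r M] using E v by (simp add: smult_mat_vec)
    finally show "(E * M) *\<^sub>v (E *\<^sub>v v) = mtrace (M * E) \<cdot>\<^sub>v (E *\<^sub>v v)" .
  qed
next
  fix c assume h: "\<forall>v \<in> carrier_vec n. (E * M) *\<^sub>v (E *\<^sub>v v) = c \<cdot>\<^sub>v (E *\<^sub>v v)"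
  obtain p q where pq: "p < n" "q < n" "E $$ (p,q) \<noteq> 0" using rank1_nonzero[OF E r] by blast
  let ?v = "unit_vec n q :: 'a vec"
  have v: "?v \<in> carrier_vec n" by simp
  have "(E * M) *\<^sub>v (E *\<^sub>v ?v) = (E * M * E) *\<^sub>v ?v"
    by (rule assoc_mult_mat_vec[symmetric]) (use E M in auto)
  also have "\<dots> = mtrace (M * E) \<cdot>\<^sub>v (E *\<^sub>v ?v)"
    unfolding trace_sandwich[OF E r M] using E by (simp add: smult_mat_vec)
  finally have "c \<cdot>\<^sub>v (E *\<^sub>v ?v) = mtrace (M * E) \<cdot>\<^sub>v (E *\<^sub>v ?v)" using h v by simp
  hence "(c \<cdot>\<^sub>v (E *\<^sub>v ?v)) $ p = (mtrace (M * E) \<cdot>\<^sub>v (E *\<^sub>v ?v)) $ p" by simp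
  moreover have "(E *\<^sub>v ?v) $ p = E $$ (p,q)"
  proof -
    have "(\<Sum>i<n. E $$ (p,i) * (if i = q then 1 else 0)) = (\<Sum>i<n. if i = q then E $$ (p,q) else 0)"
      by (rule sum.cong) auto
    also have "\<dots> = E $$ (p,q)" using pq by simp
    finally have "(\<Sum>i<n. E $$ (p,i) * (if i = q then 1 else 0)) = E $$ (p,q)" .
    then show ?thesis using E pq
      by (simp add: mult_mat_vec_def scalar_prod_def unit_vec_def atLeast0LessThan)
  qed
  ultimately show "c = mtrace (M * E)" using pq E by simp
qed



lemma mpl_carrier: "set Ms \<subseteq> carrier_mat n n \<Longrightarrow> mat_prod_list n Ms \<in> carrier_mat n n"
  by (induction Ms) auto

lemma mpl_smult:
  assumes "\<And>j. j \<in> set xs \<Longrightarrow> M j \<in> carrier_mat n n"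
  shows "mat_prod_list n (map (\<lambda>j. c j \<cdot>\<^sub>m M j) xs) = prod_list (map c xs) \<cdot>\<^sub>m mat_prod_list n (map M xs)"
  using assms
proof (induction xs)
  case Nil then show ?case by (auto intro!: eq_matI)
next
  case (Cons x xs)
  have R: "mat_prod_list n (map M xs) \<in> carrier_mat n n" using Cons.prems by (intro mpl_carrier) auto
  have Mx: "M x \<in> carrier_mat n n" using Cons.prems by auto
  have "(c x \<cdot>\<^sub>m M x) * (prod_list (map c xs) \<cdot>\<^sub>m mat_prod_list n (map M xs))
        = c x \<cdot>\<^sub>m (prod_list (map c xs) \<cdot>\<^sub>m (M x * mat_prod_list n (map M xs)))"
  proof -
    have R': "prod_list (map c xs) \<cdot>\<^sub>m mat_prod_list n (map M xs) \<in> carrier_mat n n" using R by simp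
    show ?thesis by (simp only: mult_smult_assoc_mat[OF Mx R'] mult_smult_distrib[OF Mx R])
  qed
  also have "\<dots> = (c x * prod_list (map c xs)) \<cdot>\<^sub>m (M x * mat_prod_list n (map M xs))"
    by (auto intro!: eq_matI)
  finally show ?case using Cons by simp
qed

lemma mpl_append:
  assumes "set xs \<subseteq> carrier_mat n n" "M \<in> carrier_mat n n"
  shows "mat_prod_list n (xs @ [M]) = mat_prod_list n xs * M"
  using assms
proof (induction xs)
  case Nil then show ?case by simp
next
  case (Cons x xs)
  have R: "mat_prod_list n xs \<in> carrier_mat n n" using Cons.prems by (intro mpl_carrier) auto
  have x: "x \<in> carrier_mat n n" using Cons.prems by simp
  have "mat_prod_list n ((x#xs)@[M]) = x * mat_prod_list n (xs@[M])" by simp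
  also have "\<dots> = x * (mat_prod_list n xs * M)" using Cons by simp
  also have "\<dots> = (x * mat_prod_list n xs) * M" by (rule assoc_mult_mat[OF x R Cons.prems(2), symmetric])
  finally show ?case by simp
qed

definition Lm :: "nat \<Rightarrow> 'a::field mat \<Rightarrow> (nat \<Rightarrow> 'a) \<Rightarrow> nat \<Rightarrow> 'a mat" where
  "Lm n A th j = A - th j \<cdot>\<^sub>m 1\<^sub>m n"

lemma Lm_carrier: "A \<in> carrier_mat n n \<Longrightarrow> Lm n A th j \<in> carrier_mat n n"
  unfolding Lm_def by auto

lemma Lm_mult: assumes A: "A \<in> carrier_mat n n" and P: "P \<in> carrier_mat n n"
  shows "Lm n A th j * P = A * P - th j \<cdot>\<^sub>m P"
  unfolding Lm_def using A P
  by (subst minus_mult_distrib_mat[of _ n n]) (auto simp: mult_smult_assoc_mat[of _ n n])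

lemma mult_Lm: assumes A: "A \<in> carrier_mat n n" and P: "P \<in> carrier_mat n n"
  shows "P * Lm n A th j = P * A - th j \<cdot>\<^sub>m P"
  unfolding Lm_def using A P
  by (subst mult_minus_distrib_mat[of _ n n]) (auto simp: mult_smult_distrib[of _ n n])

lemma mplL_carrier: "A \<in> carrier_mat n n \<Longrightarrow> mat_prod_list n (map (Lm n A th) xs) \<in> carrier_mat n n"
  by (rule mpl_carrier) (auto simp: Lm_carrier)

lemma A_comm: assumes A: "A \<in> carrier_mat n n"
  shows "A * mat_prod_list n (map (Lm n A th) xs) = mat_prod_list n (map (Lm n A th) xs) * A"
proof (induction xs)
  case Nil then show ?case using A by simp
next
  case (Cons x xs)
  let ?R = "mat_prod_list n (map (Lm n A th) xs)"
  have R: "?R \<in> carrier_mat n n" using mplL_carrier[OF A] .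
  have L: "Lm n A th x \<in> carrier_mat n n" using Lm_carrier[OF A] .
  have c: "A * Lm n A th x = Lm n A th x * A"
    using Lm_mult[OF A A] mult_Lm[OF A A] by simp
  have "A * (Lm n A th x * ?R) = (A * Lm n A th x) * ?R" using A L R by simp
  also have "\<dots> = Lm n A th x * (A * ?R)" unfolding c using A L R by simp
  also have "\<dots> = (Lm n A th x * ?R) * A" unfolding Cons using A L R by simp
  finally show ?case by simp
qed

lemma L_comm: assumes A: "A \<in> carrier_mat n n"
  shows "Lm n A th j * mat_prod_list n (map (Lm n A th) xs) = mat_prod_list n (map (Lm n A th) xs) * Lm n A th j"
  using Lm_mult[OF A mplL_carrier[OF A]] mult_Lm[OF A mplL_carrier[OF A]] A_comm[OF A] by metis

lemma mtrace_add: "X \<in> carrier_mat n n \<Longrightarrow> Y \<in> carrier_mat n n \<Longrightarrow> mtrace (X + Y) = mtrace X + mtrace Y"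
  unfolding mtrace_def by (simp add: sum.distrib)

lemma mtrace_smult: "X \<in> carrier_mat n n \<Longrightarrow> mtrace (c \<cdot>\<^sub>m X) = c * mtrace X"
  unfolding mtrace_def by (simp add: sum_distrib_left)

lemma mtrace_minus: "X \<in> carrier_mat n n \<Longrightarrow> Y \<in> carrier_mat n n \<Longrightarrow> mtrace (X - Y) = mtrace X - mtrace Y"
  unfolding mtrace_def by (simp add: sum_subtractf)



lemma prod_list_set: "distinct xs \<Longrightarrow> prod_list (map f xs) = prod f (set xs)"
  by (induct xs) simp_all

lemma prim_idem_carrier: "X \<in> carrier_mat n n \<Longrightarrow> prim_idem n X th d i \<in> carrier_mat n n"
  unfolding prim_idem_def by (rule mpl_carrier) auto

lemma prim_idem_Lm: assumes X: "X \<in> carrier_mat n n"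
  shows "prim_idem n X th d i = prod_list (map (\<lambda>j. 1 / (th i - th j)) (filter (\<lambda>j. j \<noteq> i) [0..<Suc d]))
     \<cdot>\<^sub>m mat_prod_list n (map (Lm n X th) (filter (\<lambda>j. j \<noteq> i) [0..<Suc d]))"
  unfolding prim_idem_def Lm_def[symmetric]
  by (rule mpl_smult) (use Lm_carrier[OF X] in auto)

lemma tau_Lm: "tau_mat n X th k = mat_prod_list n (map (Lm n X th) [0..<k])"
  unfolding tau_mat_def Lm_def by simp

lemma eta_ivl: assumes "k \<le> d"
  shows "eta_poly f d k x = (\<Prod>m\<in>{Suc (d-k)..d}. x - f m)"
  unfolding eta_poly_def
  by (rule prod.reindex_bij_witness[where i = "\<lambda>m. d - m" and j = "\<lambda>j. d - j"]) (use assms in auto)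

lemma f_smult: "X \<in> carrier_mat n n \<Longrightarrow> E \<in> carrier_mat n n \<Longrightarrow> mtrace ((c \<cdot>\<^sub>m X) * E) = c * mtrace (X * E)"
  by (simp add: mult_smult_assoc_mat[of _ n n] mtrace_smult[of _ n])

lemma f_minus: "X \<in> carrier_mat n n \<Longrightarrow> Y \<in> carrier_mat n n \<Longrightarrow> E \<in> carrier_mat n n \<Longrightarrow>
   mtrace ((X - Y) * E) = mtrace (X * E) - mtrace (Y * E)"
  by (simp add: minus_mult_distrib_mat[of _ n n] mtrace_minus[of _ n])

lemma sum_identity:
  fixes A E :: "'a::field mat"
  assumes A: "A \<in> carrier_mat n n" and E: "E \<in> carrier_mat n n"
  shows "(\<Sum>i\<le>k. (\<Prod>m\<in>{Suc i..k}. th 0 - th m) * mtrace (tau_mat n A th i * E))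
       = mtrace (mat_prod_list n (map (Lm n A th) [1..<Suc k]) * E)"
proof (induction k)
  case 0 then show ?case using E by (simp add: tau_mat_def)
next
  case (Suc k)
  let ?P = "mat_prod_list n (map (Lm n A th) [1..<Suc k])"
  have P: "?P \<in> carrier_mat n n" by (rule mplL_carrier[OF A])
  have AP: "A * ?P \<in> carrier_mat n n" using A P by simp
  have "(\<Sum>i\<le>Suc k. (\<Prod>m\<in>{Suc i..Suc k}. th 0 - th m) * mtrace (tau_mat n A th i * E))
     = (\<Sum>i\<le>k. (\<Prod>m\<in>{Suc i..k}. th 0 - th m) * (th 0 - th (Suc k)) * mtrace (tau_mat n A th i * E))
       + mtrace (tau_mat n A th (Suc k) * E)"
    by (auto intro!: sum.cong)
  also have "\<dots> = (th 0 - th (Suc k)) * (\<Sum>i\<le>k. (\<Prod>m\<in>{Suc i..k}. th 0 - th m) * mtrace (tau_mat n A th i * E))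
       + mtrace (tau_mat n A th (Suc k) * E)"
    by (simp only: sum_distrib_left mult_ac)
  also have "\<dots> = (th 0 - th (Suc k)) * mtrace (?P * E) + mtrace (tau_mat n A th (Suc k) * E)"
    by (simp only: Suc.IH)
  also have "tau_mat n A th (Suc k) = Lm n A th 0 * ?P"
  proof -
    have "[0..<Suc k] = 0 # [1..<Suc k]" by (simp add: upt_conv_Cons del: upt_Suc)
    then show ?thesis by (simp only: tau_Lm list.map mat_prod_list.simps)
  qed
  also have "\<dots> = A * ?P - th 0 \<cdot>\<^sub>m ?P" by (rule Lm_mult[OF A P])
  also have "mtrace ((A * ?P - th 0 \<cdot>\<^sub>m ?P) * E) = mtrace (A * ?P * E) - th 0 * mtrace (?P * E)"
    using f_minus[OF AP _ E, of "th 0 \<cdot>\<^sub>m ?P"] f_smult[OF P E] P by simp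
  finally have L: "(\<Sum>i\<le>Suc k. (\<Prod>m\<in>{Suc i..Suc k}. th 0 - th m) * mtrace (tau_mat n A th i * E))
     = (th 0 - th (Suc k)) * mtrace (?P * E) + (mtrace (A * ?P * E) - th 0 * mtrace (?P * E))" .
  have "mat_prod_list n (map (Lm n A th) [1..<Suc (Suc k)]) = ?P * Lm n A th (Suc k)"
  proof -
    have e: "map (Lm n A th) [1..<Suc (Suc k)] = map (Lm n A th) [1..<Suc k] @ [Lm n A th (Suc k)]" by simp
    show ?thesis unfolding e by (rule mpl_append) (use Lm_carrier[OF A] in auto)
  qed
  also have "\<dots> = Lm n A th (Suc k) * ?P" by (rule L_comm[OF A, symmetric])
  also have "\<dots> = A * ?P - th (Suc k) \<cdot>\<^sub>m ?P" by (rule Lm_mult[OF A P])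
  finally have M: "mat_prod_list n (map (Lm n A th) [1..<Suc (Suc k)]) = A * ?P - th (Suc k) \<cdot>\<^sub>m ?P" .
  have "mtrace (mat_prod_list n (map (Lm n A th) [1..<Suc (Suc k)]) * E) = mtrace ((A * ?P - th (Suc k) \<cdot>\<^sub>m ?P) * E)" by (simp only: M)
  also have "mtrace ((A * ?P - th (Suc k) \<cdot>\<^sub>m ?P) * E) = mtrace (A * ?P * E) - th (Suc k) * mtrace (?P * E)"
    using f_minus[OF AP _ E, of "th (Suc k) \<cdot>\<^sub>m ?P"] f_smult[OF P E] P by simp
  finally have R: "mtrace (mat_prod_list n (map (Lm n A th) [1..<Suc (Suc k)]) * E) = mtrace (A * ?P * E) - th (Suc k) * mtrace (?P * E)" .
  show ?case unfolding L R by (simp add: algebra_simps)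
qed



theorem lemma3p8:
  fixes A As :: "'a::alg_closed_field mat" and n d :: nat and th ths :: "nat \<Rightarrow> 'a"
  assumes "A \<in> carrier_mat n n" and "As \<in> carrier_mat n n"
    and "diagonalizable A" and "diagonalizable As"
    and "inj_on th {..d}" and "{x. eigenvalue A x} = th ` {..d}"
    and "inj_on ths {..d}" and "{x. eigenvalue As x} = ths ` {..d}"
    and "vec_space.rank n (prim_idem n As ths d 0) = 1"
  shows "(split_seq n A As th ths d d =
           eta_poly ths d d (ths 0) * tau_poly th d (th d)
             * mtrace (prim_idem n A th d d * prim_idem n As ths d 0)) \<and>
         ((\<Sum>i\<le>d. eta_poly th d (d - i) (th 0) * eta_poly ths d (d - i) (ths 0)
                  * split_seq n A As th ths d i) =
           eta_poly ths d d (ths 0) * eta_poly th d d (th 0)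
             * mtrace (prim_idem n A th d 0 * prim_idem n As ths d 0))"
proof -
  note A = assms(1) and As = assms(2) and inj = assms(5) and r = assms(9)
  define Es where "Es = prim_idem n As ths d 0"
  have Es: "Es \<in> carrier_mat n n" unfolding Es_def by (rule prim_idem_carrier[OF As])
  have r': "vec_space.rank n Es = 1" using r unfolding Es_def .
  have T: "tau_mat n A th i \<in> carrier_mat n n" for i unfolding tau_Lm by (rule mplL_carrier[OF A])
  have zeta: "split_seq n A As th ths d i = (\<Prod>j\<in>{1..i}. ths 0 - ths j) * mtrace (tau_mat n A th i * Es)" for i
    unfolding split_seq_def split_chi_def Es_def[symmetric] chi_trace[OF Es r' T] ..
  define f where "f X = mtrace (X * Es)" for X
  have etas: "eta_poly ths d d (ths 0) = (\<Prod>j\<in>{1..d}. ths 0 - ths j)"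
    using eta_ivl[of d d ths "ths 0"] by simp
  have eta: "eta_poly th d d (th 0) = (\<Prod>j\<in>{1..d}. th 0 - th j)"
    using eta_ivl[of d d th "th 0"] by simp
  have fd: "filter (\<lambda>j. j \<noteq> d) [0..<Suc d] = [0..<d]"
    by (simp add: filter_id_conv)
  define cd where "cd = (\<Prod>j<d. 1 / (th d - th j))"
  have Ed: "prim_idem n A th d d = cd \<cdot>\<^sub>m tau_mat n A th d"
    unfolding prim_idem_Lm[OF A] fd tau_Lm cd_def
    by (simp add: prod_list_set atLeast0LessThan)
  have tcd: "tau_poly th d (th d) * cd = 1"
  proof -
    have "tau_poly th d (th d) * cd = (\<Prod>j<d. (th d - th j) * (1 / (th d - th j)))"
      unfolding tau_poly_def cd_def by (simp only: prod.distrib)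
    also have "\<dots> = (\<Prod>j<d. 1)"
    proof (rule prod.cong[OF refl])
      fix j assume "j \<in> {..<d}"
      hence "th d \<noteq> th j" using inj unfolding inj_on_def by force
      thus "(th d - th j) * (1 / (th d - th j)) = 1" by simp
    qed
    finally show ?thesis by simp
  qed
  have part1: "split_seq n A As th ths d d =
           eta_poly ths d d (ths 0) * tau_poly th d (th d)
             * mtrace (prim_idem n A th d d * prim_idem n As ths d 0)"
  proof -
    have "mtrace (prim_idem n A th d d * prim_idem n As ths d 0) = cd * mtrace (tau_mat n A th d * Es)"
      unfolding Ed Es_def[symmetric] by (rule f_smult[OF T Es])
    then show ?thesis unfolding zeta etas using tcd
      by (simp add: ac_simps)
  qed
  let ?P = "mat_prod_list n (map (Lm n A th) [1..<Suc d])"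
  have P: "?P \<in> carrier_mat n n" by (rule mplL_carrier[OF A])
  have f0: "filter (\<lambda>j. j \<noteq> 0) [0..<Suc d] = [1..<Suc d]"
  proof -
    have a: "[0..<Suc d] = 0 # [1..<Suc d]" by (simp add: upt_conv_Cons del: upt_Suc)
    have b: "filter (\<lambda>j. j \<noteq> 0) [1..<Suc d] = [1..<Suc d]" by (rule filter_True) auto
    show ?thesis unfolding a using b by simp
  qed
  define c0 where "c0 = (\<Prod>j\<in>{1..d}. 1 / (th 0 - th j))"
  have E0: "prim_idem n A th d 0 = c0 \<cdot>\<^sub>m ?P"
  proof -
    have "set [1..<Suc d] = {1..d}" by auto
    then show ?thesis unfolding prim_idem_Lm[OF A] f0 c0_def
      by (simp only: prod_list_set[OF distinct_upt])
  qed
  have tc0: "eta_poly th d d (th 0) * c0 = 1"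
  proof -
    have "eta_poly th d d (th 0) * c0 = (\<Prod>j\<in>{1..d}. (th 0 - th j) * (1 / (th 0 - th j)))"
      unfolding eta c0_def by (simp only: prod.distrib)
    also have "\<dots> = (\<Prod>j\<in>{1..d}. 1)"
    proof (rule prod.cong[OF refl])
      fix j assume "j \<in> {1..d}"
      hence "th 0 \<noteq> th j" using inj unfolding inj_on_def by force
      thus "(th 0 - th j) * (1 / (th 0 - th j)) = 1" by simp
    qed
    finally show ?thesis by simp
  qed
  have trm: "eta_poly th d (d - i) (th 0) * eta_poly ths d (d - i) (ths 0) * split_seq n A As th ths d i
     = eta_poly ths d d (ths 0) * ((\<Prod>m\<in>{Suc i..d}. th 0 - th m) * mtrace (tau_mat n A th i * Es))"
    if i: "i \<le> d" for i
  proof -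
    have e1: "eta_poly th d (d - i) (th 0) = (\<Prod>m\<in>{Suc i..d}. th 0 - th m)"
      using eta_ivl[of "d - i" d th "th 0"] i by simp
    have e2: "eta_poly ths d (d - i) (ths 0) = (\<Prod>m\<in>{Suc i..d}. ths 0 - ths m)"
      using eta_ivl[of "d - i" d ths "ths 0"] i by simp
    have u: "{1..d} = {1..i} \<union> {Suc i..d}" using i by auto
    have e3: "(\<Prod>m\<in>{Suc i..d}. ths 0 - ths m) * (\<Prod>j\<in>{1..i}. ths 0 - ths j) = eta_poly ths d d (ths 0)"
      unfolding etas u by (subst prod.union_disjoint) (auto simp: ac_simps)
    show ?thesis unfolding zeta e1 e2 e3[symmetric] by (simp add: ac_simps)
  qed
  have part2: "(\<Sum>i\<le>d. eta_poly th d (d - i) (th 0) * eta_poly ths d (d - i) (ths 0)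
                  * split_seq n A As th ths d i) =
           eta_poly ths d d (ths 0) * eta_poly th d d (th 0)
             * mtrace (prim_idem n A th d 0 * prim_idem n As ths d 0)"
  proof -
    have "(\<Sum>i\<le>d. eta_poly th d (d - i) (th 0) * eta_poly ths d (d - i) (ths 0)
                  * split_seq n A As th ths d i)
        = eta_poly ths d d (ths 0) * (\<Sum>i\<le>d. (\<Prod>m\<in>{Suc i..d}. th 0 - th m) * mtrace (tau_mat n A th i * Es))"
      by (simp add: trm sum_distrib_left)
    also have "\<dots> = eta_poly ths d d (ths 0) * mtrace (?P * Es)"
      by (simp only: sum_identity[OF A Es])
    also have "mtrace (prim_idem n A th d 0 * prim_idem n As ths d 0) = c0 * mtrace (?P * Es)"
      unfolding E0 Es_def[symmetric] by (rule f_smult[OF P Es])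
    hence "eta_poly ths d d (ths 0) * mtrace (?P * Es) = eta_poly ths d d (ths 0) * eta_poly th d d (th 0)
             * mtrace (prim_idem n A th d 0 * prim_idem n As ths d 0)"
      using tc0 by (simp add: ac_simps)
    finally show ?thesis .
  qed
  show ?thesis using part1 part2 by blast
qed

end
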